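(* Let $L\le\mathrm{Aff}(\mathbb{R}^n)$ be a subgroup whose centralizer in $\mathrm{Aff}(\mathbb{R}^n)$ acts transitively on $\mathbb{R}^n$. Then the action of $L$ on $\mathbb{R}^n$ is proper if and only if $L$ is a closed subgroup of $\mathrm{Aff}(\mathbb{R}^n)$.
   Context: $\mathrm{Aff}(\mathbb{R}^n)$ is the Lie group of affine transformations of $\mathbb{R}^n$. An action of a topological group $L$ on a locally compact Hausdorff space $X$ is proper if for every compact $K\subseteq X$ the set $\{\ell\in L\mid \ell K\cap K\neq\emptyset\}$ is compact. *)

theory Defs
  imports "HOL-Analysis.Analysis"
begin

text \<open>An affine transformation x \<mapsto> A x + b of R^n is represented by the pair (A, b) with
  A invertible.  Aff(R^n) carries the Lie group topology, i.e. the subspace topology of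
  the matrix/vector space real^'n^'n \<times> real^'n.\<close>

type_synonym 'n aff = "(real^'n^'n) \<times> (real^'n)"

definition aff_group :: "'n::finite aff set" where
  "aff_group = {(A, b). invertible A}"

definition aff_app :: "'n::finite aff \<Rightarrow> real^'n \<Rightarrow> real^'n" where
  "aff_app g x = fst g *v x + snd g"

definition aff_mult :: "'n::finite aff \<Rightarrow> 'n aff \<Rightarrow> 'n aff" where
  "aff_mult g h = (fst g ** fst h, fst g *v snd h + snd g)"

definition aff_one :: "'n::finite aff" where
  "aff_one = (mat 1, 0)"

definition aff_inv :: "'n::finite aff \<Rightarrow> 'n aff" where
  "aff_inv g = (matrix_inv (fst g), - (matrix_inv (fst g) *v snd g))"

definition aff_subgroup :: "'n::finite aff set \<Rightarrow> bool" where
  "aff_subgroup L \<longleftrightarrow> L \<subseteq> aff_group \<and> aff_one \<in> L \<and>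
     (\<forall>g\<in>L. \<forall>h\<in>L. aff_mult g h \<in> L) \<and> (\<forall>g\<in>L. aff_inv g \<in> L)"

definition aff_centralizer :: "'n::finite aff set \<Rightarrow> 'n aff set" where
  "aff_centralizer L = {c \<in> aff_group. \<forall>l\<in>L. aff_mult c l = aff_mult l c}"

definition aff_transitive :: "'n::finite aff set \<Rightarrow> bool" where
  "aff_transitive C \<longleftrightarrow> (\<forall>x y. \<exists>c\<in>C. aff_app c x = y)"

text \<open>Proper action: for every compact K, {l \<in> L | l K \<inter> K \<noteq> {}} is compact
  (compactness is intrinsic, so compact in L iff compact in the ambient space).\<close>
definition aff_proper_action :: "'n::finite aff set \<Rightarrow> bool" where
  "aff_proper_action L \<longleftrightarrow>
     (\<forall>K. compact K \<longrightarrow> compact {l \<in> L. aff_app l ` K \<inter> K \<noteq> {}})"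

end

theory Submission imports Defs begin

lemma aff_app_mult: "aff_app (aff_mult g h) x = aff_app g (aff_app h x)"
  by (simp add: aff_app_def aff_mult_def matrix_vector_mul_assoc matrix_vector_right_distrib add.assoc)

lemma matrix_inv_props:
  fixes A :: "real^'n::finite^'n"
  assumes "invertible A"
  shows "A ** matrix_inv A = mat 1" "matrix_inv A ** A = mat 1"
proof -
  have "\<exists>A'. A ** A' = mat 1 \<and> A' ** A = mat 1" using assms by (simp add: invertible_def)
  from someI_ex[OF this] show "A ** matrix_inv A = mat 1" "matrix_inv A ** A = mat 1"
    by (simp_all add: matrix_inv_def)
qed

lemma aff_inv_app:
  assumes "g \<in> aff_group"
  shows "aff_app (aff_inv g) (aff_app g x) = x"
proof -
  have "invertible (fst g)" using assms by (auto simp: aff_group_def)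
  from matrix_inv_props(2)[OF this] show ?thesis
    by (simp add: aff_app_def aff_inv_def matrix_vector_right_distrib matrix_vector_mul_assoc)
qed

lemma aff_growth:
  "norm (aff_app g x) \<le> onorm ((*v) (fst g)) * norm x + norm (snd g)"
proof -
  have "norm (fst g *v x) \<le> onorm ((*v) (fst g)) * norm x"
    by (rule onorm[OF matrix_vector_mul_bounded_linear])
  then show ?thesis unfolding aff_app_def by (meson add_mono norm_triangle_ineq order_trans order_refl)
qed

lemma aff_inv_growth:
  assumes "g \<in> aff_group"
  shows "norm x \<le> onorm ((*v) (matrix_inv (fst g))) * (norm (aff_app g x) + norm (snd g))"
proof -
  have inv: "invertible (fst g)" using assms by (auto simp: aff_group_def)
  have "x = matrix_inv (fst g) *v (aff_app g x - snd g)"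
    using matrix_inv_props(2)[OF inv]
    by (simp add: aff_app_def matrix_vector_mul_assoc)
  then have "norm x \<le> onorm ((*v) (matrix_inv (fst g))) * norm (aff_app g x - snd g)"
    by (metis onorm[OF matrix_vector_mul_bounded_linear])
  also have "\<dots> \<le> onorm ((*v) (matrix_inv (fst g))) * (norm (aff_app g x) + norm (snd g))"
    by (intro mult_left_mono norm_triangle_ineq4 onorm_pos_le[OF matrix_vector_mul_bounded_linear])
  finally show ?thesis .
qed

lemma matrix_norm_le_entries:
  fixes A :: "real^'n::finite^'m::finite"
  shows "norm A \<le> (\<Sum>i\<in>UNIV. \<Sum>j\<in>UNIV. \<bar>A$i$j\<bar>)"
proof -
  have "norm A \<le> (\<Sum>i\<in>UNIV. norm (A$i))"
    unfolding norm_vec_def by (rule L2_set_le_sum) simp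
  also have "\<dots> \<le> (\<Sum>i\<in>UNIV. \<Sum>j\<in>UNIV. \<bar>A$i$j\<bar>)"
    by (intro sum_mono norm_le_l1_cart)
  finally show ?thesis .
qed

lemma cont_mv: "continuous_on UNIV (\<lambda>z::(real^'n::finite) \<times> ('n aff). aff_app (snd z) (fst z))"
  unfolding aff_app_def matrix_vector_mult_def
  by (intro continuous_intros)

lemma cont_mv2: "continuous_on UNIV (\<lambda>l::'n::finite aff. fst l *v x)"
  unfolding matrix_vector_mult_def
  by (intro continuous_intros)

lemma closed_imp_proper:
  fixes L :: "'n::finite aff set"
  assumes sg: "aff_subgroup L" and tr: "aff_transitive (aff_centralizer L)"
    and cl: "closedin (top_of_set aff_group) L" and K: "compact K"
  shows "compact {l \<in> L. aff_app l ` K \<inter> K \<noteq> {}}"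
proof -
  define C where "C = aff_centralizer L"
  have comm: "aff_app c (aff_app l x) = aff_app l (aff_app c x)" if "l \<in> L" "c \<in> C" for l c x
  proof -
    have "aff_mult c l = aff_mult l c" using that by (auto simp: C_def aff_centralizer_def)
    then show ?thesis by (metis aff_app_mult)
  qed
  define cf where "cf x = (SOME c. c \<in> C \<and> aff_app c 0 = x)" for x
  have cf: "cf x \<in> C \<and> aff_app (cf x) 0 = x" for x
  proof -
    have "\<exists>c. c \<in> C \<and> aff_app c 0 = x" using tr unfolding aff_transitive_def C_def by blast
    from someI_ex[OF this] show ?thesis by (simp add: cf_def)
  qed
  have cfG: "cf x \<in> aff_group" for x using cf[of x] by (auto simp: C_def aff_centralizer_def)
  have app0: "aff_app l 0 = snd l" for l by (simp add: aff_app_def)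
  have key: "aff_app l x = aff_app (cf x) (snd l)" if "l \<in> L" for l x
    by (metis app0 cf comm that)
  define bj where "bj j = onorm ((*v) (fst (cf (axis j 1)))) + 1" for j :: 'n
  define \<beta> where "\<beta> = (\<Sum>j\<in>UNIV. bj j)"
  define \<gamma> where "\<gamma> = (\<Sum>j\<in>UNIV. norm (snd (cf (axis j 1))))"
  have bj0: "0 \<le> bj j" for j
  proof -
    have "0 \<le> onorm ((*v) (fst (cf (axis j 1))))" by (rule onorm_pos_le[OF matrix_vector_mul_bounded_linear])
    then show ?thesis by (simp add: bj_def)
  qed
  have \<beta>0: "0 \<le> \<beta>" unfolding \<beta>_def by (simp add: bj0 sum_nonneg)
  have \<gamma>0: "0 \<le> \<gamma>" unfolding \<gamma>_def by (simp add: sum_nonneg)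
  have entry: "\<bar>fst l $ i $ j\<bar> \<le> \<beta> * norm (snd l) + \<gamma>" if "l \<in> L" for l i j
  proof -
    have col: "column j (fst l) = aff_app (cf (axis j 1)) (snd l) - snd l"
      using key[OF that, of "axis j 1"] by (simp add: aff_app_def matrix_vector_mult_basis eq_diff_eq)
    have "\<bar>fst l $ i $ j\<bar> = \<bar>column j (fst l) $ i\<bar>" by (simp add: column_def)
    also have "\<dots> \<le> norm (column j (fst l))" by (rule component_le_norm_cart)
    also have "\<dots> \<le> norm (aff_app (cf (axis j 1)) (snd l)) + norm (snd l)"
      unfolding col by (rule norm_triangle_ineq4)
    also have "\<dots> \<le> bj j * norm (snd l) + norm (snd (cf (axis j 1)))"
      using aff_growth[of "cf (axis j 1)" "snd l"] by (simp add: bj_def algebra_simps)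
    also have "\<dots> \<le> \<beta> * norm (snd l) + \<gamma>"
    proof (intro add_mono mult_right_mono)
      show "bj j \<le> \<beta>" unfolding \<beta>_def by (rule member_le_sum) (auto simp: bj0)
      show "norm (snd (cf (axis j 1))) \<le> \<gamma>" unfolding \<gamma>_def by (rule member_le_sum) auto
    qed simp
    finally show ?thesis .
  qed
  define N where "N = real CARD('n) * real CARD('n)"
  have N0: "0 \<le> N" by (simp add: N_def)
  have mvb: "norm (fst l *v v) \<le> N * (\<beta> * norm (snd l) + \<gamma>) * norm v" if "l \<in> L" for l v
  proof -
    have "onorm ((*v) (fst l)) \<le> N * (\<beta> * norm (snd l) + \<gamma>)"
      using onorm_le_matrix_component[of "fst l", OF entry[OF that]] by (simp add: N_def)
    then show ?thesis
      by (meson norm_ge_zero onorm[OF matrix_vector_mul_bounded_linear] order_trans mult_right_mono)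
  qed
  have fstb: "norm (fst l) \<le> N * (\<beta> * norm (snd l) + \<gamma>)" if "l \<in> L" for l
  proof -
    have "norm (fst l) \<le> (\<Sum>i\<in>UNIV. \<Sum>j\<in>UNIV. \<bar>fst l $ i $ j\<bar>)" by (rule matrix_norm_le_entries)
    also have "\<dots> \<le> (\<Sum>i\<in>(UNIV::'n set). \<Sum>j\<in>(UNIV::'n set). \<beta> * norm (snd l) + \<gamma>)"
      by (intro sum_mono entry[OF that])
    finally show ?thesis by (simp add: N_def)
  qed
  obtain Q where Q: "Q > 0" "\<And>q. q \<in> K \<Longrightarrow> norm q \<le> Q"
    using compact_imp_bounded[OF K] by (auto simp: bounded_pos)
  have local: "\<exists>d R. d > 0 \<and> (\<forall>l\<in>L. \<forall>k\<in>K. dist k k0 < d \<longrightarrow> aff_app l k \<in> K \<longrightarrow> norm (snd l) \<le> R)" for k0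
  proof -
    define c where "c = cf k0"
    define a0 where "a0 = onorm ((*v) (matrix_inv (fst c)))"
    define b0 where "b0 = norm (snd c)"
    have a00: "0 \<le> a0" unfolding a0_def by (rule onorm_pos_le[OF matrix_vector_mul_bounded_linear])
    define d where "d = 1 / (2 * (a0 * N * \<beta> + 1))"
    have nn: "0 \<le> a0 * N * \<beta>" using a00 N0 \<beta>0 by simp
    have pos: "0 < 2 * (a0 * N * \<beta> + 1)" using nn by simp
    have d0: "0 < d" unfolding d_def using pos by simp
    have d1: "d \<le> 1" unfolding d_def using nn by (simp add: field_simps)
    have d2: "a0 * N * \<beta> * d \<le> 1/2" unfolding d_def using pos by (simp add: field_simps)
    show ?thesis
    proof (intro exI conjI ballI impI)
      show "0 < d" by (fact d0)
      fix l k assume l: "l \<in> L" and k: "k \<in> K" and dk: "dist k k0 < d" and lk: "aff_app l k \<in> K"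
      define p where "p = snd l"
      define t where "t = norm (k0 - k)"
      have t: "t < d" "0 \<le> t" using dk by (simp_all add: t_def dist_norm norm_minus_commute)
      have "aff_app c p = aff_app l k0" using key[OF l, of k0] by (simp add: c_def p_def)
      also have "\<dots> = aff_app l k + fst l *v (k0 - k)"
        by (simp add: aff_app_def matrix_vector_mult_diff_distrib)
      finally have eq: "aff_app c p = aff_app l k + fst l *v (k0 - k)" .
      have "norm (aff_app c p) \<le> norm (aff_app l k) + norm (fst l *v (k0 - k))"
        unfolding eq by (rule norm_triangle_ineq)
      also have "\<dots> \<le> Q + N * (\<beta> * norm p + \<gamma>) * t"
        unfolding t_def p_def using Q(2)[OF lk] mvb[OF l, of "k0 - k"] by (rule add_mono)
      finally have "norm p \<le> a0 * (Q + N * (\<beta> * norm p + \<gamma>) * t + b0)"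
        using aff_inv_growth[OF cfG[of k0], of p] a00
        by (simp add: c_def[symmetric] a0_def[symmetric] b0_def[symmetric])
           (meson add_mono_thms_linordered_semiring(3) mult_left_mono order_trans)
      also have "\<dots> = a0 * Q + (a0 * N * \<beta> * t) * norm p + a0 * N * \<gamma> * t + a0 * b0"
        by (simp add: algebra_simps)
      also have "\<dots> \<le> a0 * Q + (1/2) * norm p + a0 * N * \<gamma> + a0 * b0"
      proof -
        have "a0 * N * \<beta> * t \<le> a0 * N * \<beta> * d"
          using t a00 N0 \<beta>0 by (intro mult_left_mono) auto
        then have "(a0 * N * \<beta> * t) * norm p \<le> (1/2) * norm p"
          using d2 by (intro mult_right_mono) auto
        moreover have "a0 * N * \<gamma> * t \<le> a0 * N * \<gamma>"
          using t d1 a00 N0 \<gamma>0 by (intro mult_left_le) (auto intro: mult_nonneg_nonneg)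
        ultimately show ?thesis by linarith
      qed
      finally show "norm (snd l) \<le> 2 * (a0 * Q) + 2 * (a0 * N * \<gamma>) + 2 * (a0 * b0)"
        unfolding p_def by linarith
    qed
  qed
  obtain d R where dR: "\<And>k0. d k0 > 0"
    "\<And>k0 l k. l \<in> L \<Longrightarrow> k \<in> K \<Longrightarrow> dist k k0 < d k0 \<Longrightarrow> aff_app l k \<in> K \<Longrightarrow> norm (snd l) \<le> R k0"
    using local by metis
  obtain D where D: "D \<subseteq> K" "finite D" "K \<subseteq> (\<Union>k0\<in>D. ball k0 (d k0))"
  proof (rule compactE_image[OF K, of K "\<lambda>k0. ball k0 (d k0)"])
    show "K \<subseteq> (\<Union>k0\<in>K. ball k0 (d k0))" using dR(1) by force
  qed auto
  define Rt where "Rt = (\<Sum>k0\<in>D. \<bar>R k0\<bar>)"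
  define S where "S = {l \<in> L. aff_app l ` K \<inter> K \<noteq> {}}"
  have LG: "L \<subseteq> aff_group" using sg by (simp add: aff_subgroup_def)
  have sndb: "norm (snd l) \<le> Rt" if "l \<in> S" for l
  proof -
    from that obtain k where l: "l \<in> L" and k: "k \<in> K" and lk: "aff_app l k \<in> K" by (auto simp: S_def)
    from D(3) k obtain k0 where k0: "k0 \<in> D" "dist k0 k < d k0" by auto
    have "norm (snd l) \<le> R k0" using dR(2)[OF l k _ lk] k0 by (simp add: dist_commute)
    also have "\<dots> \<le> \<bar>R k0\<bar>" by simp
    also have "\<dots> \<le> Rt" unfolding Rt_def by (rule member_le_sum) (use k0 D in auto)
    finally show ?thesis .
  qed
  define Bs where "Bs = N * (\<beta> * Rt + \<gamma>) + Rt"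
  have nb: "norm l \<le> Bs" if "l \<in> S" for l
  proof -
    have lL: "l \<in> L" using that by (simp add: S_def)
    have "norm l \<le> norm (fst l) + norm (snd l)" using norm_Pair_le[of "fst l" "snd l"] by simp
    also have "\<dots> \<le> N * (\<beta> * norm (snd l) + \<gamma>) + norm (snd l)" using fstb[OF lL] by simp
    also have "\<dots> \<le> Bs" unfolding Bs_def using sndb[OF that] N0 \<beta>0
      by (intro add_mono mult_left_mono) auto
    finally show ?thesis .
  qed
  have invS: "aff_inv l \<in> S" if "l \<in> S" for l
  proof -
    from that obtain k where l: "l \<in> L" and k: "k \<in> K" and lk: "aff_app l k \<in> K" by (auto simp: S_def)
    have "aff_inv l \<in> L" using sg l by (simp add: aff_subgroup_def)
    moreover have "aff_app (aff_inv l) (aff_app l k) = k" using aff_inv_app l LG by blast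
    moreover have "k \<in> aff_app (aff_inv l) ` K \<inter> K"
      using k lk \<open>aff_app (aff_inv l) (aff_app l k) = k\<close> by (metis IntI image_eqI)
    ultimately show ?thesis unfolding S_def by blast
  qed
  define M where "M = N * Bs"
  define W where "W = {l::'n aff. \<forall>x. norm x \<le> M * norm (fst l *v x)}"
  have SW: "S \<subseteq> W"
  proof
    fix l assume lS: "l \<in> S"
    have inv: "invertible (fst l)" using lS LG by (auto simp: S_def aff_group_def)
    have "\<bar>matrix_inv (fst l) $ i $ j\<bar> \<le> Bs" for i j
    proof -
      have "\<bar>matrix_inv (fst l) $ i $ j\<bar> \<le> norm (matrix_inv (fst l) $ i)" by (rule component_le_norm_cart)
      also have "\<dots> \<le> norm (matrix_inv (fst l))" by (simp add: Finite_Cartesian_Product.norm_nth_le)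
      also have "\<dots> \<le> norm (aff_inv l)" unfolding aff_inv_def by (rule norm_fst_le)
      also have "\<dots> \<le> Bs" by (rule nb[OF invS[OF lS]])
      finally show ?thesis .
    qed
    then have on: "onorm ((*v) (matrix_inv (fst l))) \<le> M"
      using onorm_le_matrix_component[of "matrix_inv (fst l)" Bs] by (simp add: M_def N_def)
    show "l \<in> W" unfolding W_def mem_Collect_eq
    proof (rule allI)
      fix x
      have "x = matrix_inv (fst l) *v (fst l *v x)"
        using matrix_inv_props(2)[OF inv] by (simp add: matrix_vector_mul_assoc)
      then have "norm x \<le> onorm ((*v) (matrix_inv (fst l))) * norm (fst l *v x)"
        by (metis onorm[OF matrix_vector_mul_bounded_linear])
      also have "\<dots> \<le> M * norm (fst l *v x)" using on by (simp add: mult_right_mono)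
      finally show "norm x \<le> M * norm (fst l *v x)" .
    qed
  qed
  have WG: "W \<subseteq> aff_group"
  proof
    fix l assume "l \<in> W"
    then have "\<forall>x. fst l *v x = 0 \<longrightarrow> x = 0"
          proof (intro allI impI)
      fix x assume "fst l *v x = 0"
      moreover have "norm x \<le> M * norm (fst l *v x)" using \<open>l \<in> W\<close> by (simp add: W_def)
      ultimately have "norm x \<le> 0" by simp
      then show "x = 0" by simp
    qed
    then have "invertible (fst l)"
      by (simp add: invertible_left_inverse matrix_left_invertible_ker)
    then show "l \<in> aff_group" by (cases l) (simp add: aff_group_def)
  qed
  obtain T where T: "closed T" "L = aff_group \<inter> T" using cl by (auto simp: closedin_closed)
  define Qs where "Qs = {l. \<exists>k. k \<in> K \<and> (k, l) \<in> (\<lambda>z. aff_app (snd z) (fst z)) -` K}"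
  have clQ: "closed Qs" unfolding Qs_def
  proof (rule closed_compact_projection[OF K])
    show "closed ((\<lambda>z::(real^'n) \<times> 'n aff. aff_app (snd z) (fst z)) -` K)"
      by (rule continuous_closed_vimage[OF compact_imp_closed[OF K]])
        (use cont_mv in \<open>auto simp add: continuous_on_eq_continuous_at simp del: split_paired_All\<close>)
  qed
  have clW: "closed W"
  proof -
    have "W = (\<Inter>x. {l. norm x \<le> M * norm (fst l *v x)})" by (auto simp: W_def)
    moreover have "closed {l::'n aff. norm x \<le> M * norm (fst l *v x)}" for x
      by (rule closed_Collect_le[OF continuous_on_const continuous_on_mult[OF continuous_on_const continuous_on_norm[OF cont_mv2]]])
    ultimately show ?thesis by auto
  qed
  have SE: "S = T \<inter> Qs \<inter> W"
  proof
    show "S \<subseteq> T \<inter> Qs \<inter> W"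
    proof
      fix l assume lS: "l \<in> S"
      from lS obtain k where l: "l \<in> L" and k: "k \<in> K" and lk: "aff_app l k \<in> K" by (auto simp: S_def)
      have "l \<in> T" using l T(2) by blast
      moreover have "l \<in> Qs" unfolding Qs_def using k lk by auto
      ultimately show "l \<in> T \<inter> Qs \<inter> W" using SW lS by blast
    qed
    show "T \<inter> Qs \<inter> W \<subseteq> S"
    proof
      fix l assume l: "l \<in> T \<inter> Qs \<inter> W"
      then have lL: "l \<in> L" using WG T(2) by blast
      from l obtain k where k: "k \<in> K" and lk: "aff_app l k \<in> K" unfolding Qs_def by auto
      have "aff_app l k \<in> aff_app l ` K \<inter> K" using k lk by blast
      then show "l \<in> S" unfolding S_def using lL by blast
    qed
  qed
  have "bounded S" unfolding bounded_iff using nb by blast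
  moreover have "closed S" unfolding SE using T(1) clQ clW by blast
  ultimately show ?thesis unfolding S_def[symmetric] by (simp add: compact_eq_bounded_closed)
qed


lemma proper_imp_closed:
  fixes L :: "'n::finite aff set"
  assumes sg: "aff_subgroup L" and pr: "aff_proper_action L"
  shows "closedin (top_of_set aff_group) L"
proof -
  have "closed L" unfolding closed_sequential_limits
  proof (intro allI impI, elim conjE)
    fix x g assume xL: "\<forall>n. x n \<in> L" and lim: "x \<longlonglongrightarrow> g"
    have "(\<lambda>n. snd (x n)) \<longlonglongrightarrow> snd g" using lim by (rule tendsto_snd)
    then have "bounded (range (\<lambda>n. snd (x n)))" by (rule convergent_imp_bounded)
    then obtain R where R: "R > 0" "\<And>n. norm (snd (x n)) \<le> R" by (auto simp: bounded_pos)
    define S where "S = {l \<in> L. aff_app l ` cball 0 R \<inter> cball 0 R \<noteq> {}}"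
    have "compact S" using pr by (simp add: aff_proper_action_def S_def)
    then have cS: "closed S" by (rule compact_imp_closed)
    have xS: "x n \<in> S" for n
    proof -
      have "aff_app (x n) 0 \<in> aff_app (x n) ` cball 0 R \<inter> cball 0 R"
      proof
        show "aff_app (x n) 0 \<in> aff_app (x n) ` cball 0 R" using R by auto
        show "aff_app (x n) 0 \<in> cball 0 R" using R by (simp add: aff_app_def)
      qed
      then show ?thesis using xL by (auto simp: S_def)
    qed
    have "g \<in> S" using cS lim xS unfolding closed_sequential_limits by blast
    then show "g \<in> L" by (simp add: S_def)
  qed
  moreover have "L \<subseteq> aff_group" using sg by (simp add: aff_subgroup_def)
  ultimately show ?thesis using closedin_closed_Int[of L aff_group] by (simp add: Int_absorb1)
qed

theorem proposition7p2:
  fixes L :: "'n::finite aff set"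
  assumes "aff_subgroup L"
    and "aff_transitive (aff_centralizer L)"
  shows "aff_proper_action L \<longleftrightarrow> closedin (top_of_set aff_group) L"
  using proper_imp_closed[OF assms(1)] closed_imp_proper[OF assms]
  by (auto simp: aff_proper_action_def)

end
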